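(* Let $\mathbb{M}\subset\mathbb{T}^d$ be Lebesgue measurable with $0<|\mathbb{M}|<|\mathbb{T}^d|$, and suppose (after permuting coordinates) that $\mathbf{e}_1,\dots,\mathbf{e}_m$ ($m\ge1$) generate relevant directions while $\mathbf{e}_{m+1},\dots,\mathbf{e}_d$ generate irrelevant directions. Then there exist signs $s_1,\dots,s_m\in\{+1,-1\}$ and constants $\sigma>0$, $\epsilon_->0$ such that, with $$V=\Big\{(s_1a_1,\dots,s_ma_m,0,\dots,0)\ :\ a_i\ge0,\ \textstyle\sum_{i=1}^m a_i^2=1\Big\},$$ every vector of $V$ generates a relevant direction, and $$\Lambda_{\mathbb{M}}(\mathbf{v})\ge\sigma\|\mathbf{v}\|\quad\text{for every nonzero }\mathbf{v}\in\mathbb{R}^d\text{ with }\mathbf{v}/\|\mathbf{v}\|\in V\text{ and }\|\mathbf{v}\|<\epsilon_- ,$$ where $\|\cdot\|$ is the Euclidean norm.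
   Context: $\mathbb{T}^d=(\mathbb{R}/2\pi\mathbb{Z})^d$ with Lebesgue measure $|\cdot|$, $|\mathbb{T}^d|=(2\pi)^d$. For $\mathbf{a}\in\mathbb{R}^d$, $\mathbb{M}+\mathbf{a}$ is the translate of $\mathbb{M}$ (mod $2\pi$ in each coordinate), and $\Lambda_{\mathbb{M}}(\mathbf{a})=|\mathbb{M}\setminus(\mathbb{M}+\mathbf{a})|$. A vector $\mathbf{a}\in\mathbb{R}^d$ generates an irrelevant direction (with respect to $\mathbb{M}$) if $\Lambda_{\mathbb{M}}(\kappa\mathbf{a})=0$ for all $\kappa\in\mathbb{R}$; otherwise it generates a relevant direction. $\mathbf{e}_i$ denotes the $i$-th standard unit vector of $\mathbb{R}^d$. *)

theory Defs
  imports "HOL-Analysis.Analysis"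
begin

text \<open>The torus T^d = (R/2 pi Z)^d is represented by its fundamental domain
  [0, 2 pi)^d inside real^'n; the dimension d is CARD('n).\<close>

definition torus_dom :: "(real^'n) set" where
  "torus_dom = {x. \<forall>i. 0 \<le> x$i \<and> x$i < 2*pi}"

definition mod2pi :: "real \<Rightarrow> real" where
  "mod2pi t = t - 2*pi * of_int \<lfloor>t / (2*pi)\<rfloor>"

definition torus_translate :: "(real^'n) set \<Rightarrow> real^'n \<Rightarrow> (real^'n) set" where
  "torus_translate M a = (\<lambda>x. \<chi> i. mod2pi (x$i + a$i)) ` M"

definition Lambda :: "(real^'n) set \<Rightarrow> real^'n \<Rightarrow> real" where
  "Lambda M a = measure lebesgue (M - torus_translate M a)"

definition irrelevant_dir :: "(real^'n) set \<Rightarrow> real^'n \<Rightarrow> bool" where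
  "irrelevant_dir M a \<longleftrightarrow> (\<forall>\<kappa>::real. Lambda M (\<kappa> *\<^sub>R a) = 0)"

definition relevant_dir :: "(real^'n) set \<Rightarrow> real^'n \<Rightarrow> bool" where
  "relevant_dir M a \<longleftrightarrow> \<not> irrelevant_dir M a"

end

theory Submission
  imports Defs "HOL-Analysis.Analysis"
begin


lemma floor_shift2pi: "\<lfloor>(t + 2*pi * of_int k)/(2*pi)\<rfloor> = \<lfloor>t/(2*pi)\<rfloor> + k"
proof -
  have "(t + 2*pi * of_int k)/(2*pi) = t/(2*pi) + of_int k" by (simp add: field_simps)
  then show ?thesis by simp
qed

lemma floor0_2pi: "\<lfloor>t/(2*pi)\<rfloor> = 0 \<longleftrightarrow> 0 \<le> t \<and> t < 2*pi"
  apply (simp add: floor_eq_iff divide_less_eq zero_le_divide_iff)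
  using pi_gt_zero by linarith

lemma mod2pi_shift: "mod2pi (t + 2*pi * of_int k) = mod2pi t"
  unfolding mod2pi_def floor_shift2pi by (simp add: algebra_simps)

lemma mod2pi_id: "0 \<le> t \<Longrightarrow> t < 2*pi \<Longrightarrow> mod2pi t = t"
  unfolding mod2pi_def using floor0_2pi by simp

lemma mod2pi_range: "0 \<le> mod2pi t \<and> mod2pi t < 2*pi"
proof -
  have a: "of_int \<lfloor>t/(2*pi)\<rfloor> \<le> t/(2*pi)" by (rule of_int_floor_le)
  have b: "t/(2*pi) < of_int \<lfloor>t/(2*pi)\<rfloor> + 1" by (rule real_of_int_floor_add_one_gt)
  from a have "2*pi * of_int \<lfloor>t/(2*pi)\<rfloor> \<le> t" using pi_gt_zero by (simp add: le_divide_eq ac_simps)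
  moreover from b have "t < 2*pi * of_int \<lfloor>t/(2*pi)\<rfloor> + 2*pi" using pi_gt_zero by (simp add: divide_less_eq algebra_simps)
  ultimately show ?thesis unfolding mod2pi_def by simp
qed

lemma mod2pi_add: "mod2pi (mod2pi s + c) = mod2pi (s + c)"
proof -
  have "mod2pi s + c = (s + c) + 2*pi * of_int (- \<lfloor>s/(2*pi)\<rfloor>)"
    unfolding mod2pi_def by simp
  then have "mod2pi (mod2pi s + c) = mod2pi ((s + c) + 2*pi * of_int (- \<lfloor>s/(2*pi)\<rfloor>))" by (rule arg_cong)
  then show ?thesis by (simp only: mod2pi_shift)
qed

definition red :: "real^'n \<Rightarrow> real^'n" where "red x = (\<chi> i. mod2pi (x$i))"
definition Lv :: "('n \<Rightarrow> int) \<Rightarrow> real^'n" where "Lv k = (\<chi> i. 2*pi * of_int (k i))"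
definition fl :: "real^'n \<Rightarrow> ('n \<Rightarrow> int)" where "fl x = (\<lambda>i. \<lfloor>x$i/(2*pi)\<rfloor>)"
definition tper :: "(real^'n) set \<Rightarrow> bool" where "tper Q \<longleftrightarrow> (\<forall>x. x \<in> Q \<longleftrightarrow> red x \<in> Q)"

lemma red_shift: "red (x + Lv k) = red x"
  by (simp add: red_def Lv_def vec_eq_iff mod2pi_shift)

lemma red_D: "x \<in> torus_dom \<Longrightarrow> red x = x"
  by (simp add: red_def torus_dom_def vec_eq_iff mod2pi_id)

lemma red_in_D: "red x \<in> torus_dom"
  by (simp add: red_def torus_dom_def mod2pi_range)

lemma red_eq: "red x = x - Lv (fl x)"
  by (simp add: red_def Lv_def fl_def vec_eq_iff mod2pi_def)

lemma fl_shift: "fl (x + Lv k) = (\<lambda>i. fl x i + k i)"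
  by (simp add: fl_def Lv_def fun_eq_iff floor_shift2pi)

lemma fl_D: "x \<in> torus_dom \<longleftrightarrow> fl x = (\<lambda>i. 0)"
  by (simp add: fl_def torus_dom_def fun_eq_iff floor0_2pi)

lemma red_red_add: "red (red x + c) = red (x + c)"
  by (simp add: red_def vec_eq_iff mod2pi_add)

lemma red_red_diff: "red (red x - c) = red (x - c)"
  using red_red_add[of x "-c"] by simp

lemma tper_shift: "tper Q \<Longrightarrow> tper {x. x - a \<in> Q}"
  unfolding tper_def by (metis mem_Collect_eq red_red_diff)

lemma tper_Int: "tper Q \<Longrightarrow> tper Q' \<Longrightarrow> tper (Q \<inter> Q')"
  unfolding tper_def by blast

lemma tper_Diff: "tper Q \<Longrightarrow> tper Q' \<Longrightarrow> tper (Q - Q')"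
  unfolding tper_def by blast

lemma tper_P: "tper {x. red x \<in> M}"
  unfolding tper_def by (simp add: red_D red_in_D)

lemma tper_Lv: "tper Q \<Longrightarrow> x + Lv k \<in> Q \<longleftrightarrow> x \<in> Q"
  unfolding tper_def by (metis red_shift)

lemma translate_eq:
  assumes "M \<subseteq> torus_dom"
  shows "torus_translate M a = torus_dom \<inter> {x. x - a \<in> {y. red y \<in> M}}"
proof -
  have e: "(\<lambda>x. \<chi> i. mod2pi (x$i + a$i)) = (\<lambda>x. red (x + a))"
    by (simp add: red_def fun_eq_iff)
  show ?thesis
  proof (rule set_eqI, rule iffI)
    fix x assume "x \<in> torus_translate M a"
    then obtain m where m: "m \<in> M" "x = red (m + a)" unfolding torus_translate_def e by auto
    have "red (x - a) = m" using m assms red_red_diff[of "m + a" a] red_D by auto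
    then show "x \<in> torus_dom \<inter> {x. x - a \<in> {y. red y \<in> M}}" using m red_in_D by auto
  next
    fix x assume x: "x \<in> torus_dom \<inter> {x. x - a \<in> {y. red y \<in> M}}"
    have "x = red (red (x - a) + a)" using x red_red_add[of "x - a" a] red_D[of x] by auto
    then show "x \<in> torus_translate M a" unfolding torus_translate_def e using x by auto
  qed
qed

lemma M_eq: assumes "M \<subseteq> torus_dom" shows "M = torus_dom \<inter> {y. red y \<in> M}"
proof (rule set_eqI)
  fix x show "x \<in> M \<longleftrightarrow> x \<in> torus_dom \<inter> {y. red y \<in> M}"
    using red_D[of x] assms by auto
qed

lemma Lambda_eq:
  assumes "M \<subseteq> torus_dom"
  shows "Lambda M a = measure lebesgue (torus_dom \<inter> ({y. red y \<in> M} - {x. x - a \<in> {y. red y \<in> M}}))"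
proof -
  have "M - torus_translate M a = torus_dom \<inter> ({y. red y \<in> M} - {x. x - a \<in> {y. red y \<in> M}})"
    using translate_eq[OF assms, of a] M_eq[OF assms] by blast
  then show ?thesis unfolding Lambda_def by simp
qed

lemma P_union: "M \<subseteq> torus_dom \<Longrightarrow> {y. red y \<in> M} = (\<Union>k. (+) (Lv k) ` M)"
proof (rule set_eqI, rule iffI)
  fix x assume "M \<subseteq> torus_dom" "x \<in> {y. red y \<in> M}"
  then show "x \<in> (\<Union>k. (+) (Lv k) ` M)" using red_eq[of x]
    by (auto intro!: exI[of _ "fl x"] image_eqI[of _ _ "red x"])
next
  fix x assume M: "M \<subseteq> torus_dom" and "x \<in> (\<Union>k. (+) (Lv k) ` M)"
  then obtain k m where "m \<in> M" "x = Lv k + m" by auto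
  then show "x \<in> {y. red y \<in> M}" using M red_shift[of m k] red_D[of m] by (auto simp: add.commute subset_eq)
qed

lemma P_meas: "M \<subseteq> torus_dom \<Longrightarrow> M \<in> sets lebesgue \<Longrightarrow> {y. red y \<in> M} \<in> sets lebesgue"
  apply (subst P_union, assumption)
  apply (rule sets.countable_UN')
  by (auto intro: lebesgue_sets_translation)

lemma shift_meas: "Q \<in> sets lebesgue \<Longrightarrow> {x. x - a \<in> Q} \<in> sets lebesgue"
proof -
  assume "Q \<in> sets lebesgue"
  moreover have "{x. x - a \<in> Q} = (+) a ` Q" by (force simp: algebra_simps)
  ultimately show ?thesis using lebesgue_sets_translation by metis
qed

lemma D_borel: "torus_dom \<in> sets borel"
  unfolding torus_dom_def by measurable

lemma D_leb: "torus_dom \<in> sets lebesgue"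
  using D_borel by auto

lemma emeasure_transl: "emeasure lebesgue ((+) c ` S) = emeasure lebesgue S"
  using emeasure_lebesgue_affine[of 1 c S] by (simp add: add.commute)



lemma Lv_neg: "Lv (\<lambda>i. - k i) = - Lv k"
  by (simp add: Lv_def vec_eq_iff)

lemma fl_D0: "y \<in> torus_dom \<Longrightarrow> fl (y + Lv k) = k"
  using fl_shift[of y k] fl_D[of y] by simp

lemma inv_emeasure:
  assumes per: "tper Q" and Qm: "Q \<in> sets lebesgue"
  shows "emeasure lebesgue (torus_dom \<inter> {x. x - a \<in> Q}) = emeasure lebesgue (torus_dom \<inter> Q)"
proof -
  define Y where "Y k = {y. y \<in> Q \<and> y \<in> torus_dom \<and> fl (y + a) = (\<lambda>i. - k i)}" for k
  define Z where "Z k = (+) (a + Lv k) ` Y k" for k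
  have Yalt: "Y k = Q \<inter> torus_dom \<inter> {y. y - (- (a + Lv k)) \<in> torus_dom}" for k
  proof -
    have "fl (y + a) = (\<lambda>i. - k i) \<longleftrightarrow> y + a + Lv k \<in> torus_dom" for y
      using fl_shift[of "y + a" k] fl_D[of "y + a + Lv k"] by (simp add: fun_eq_iff eq_neg_iff_add_eq_0)
    then show ?thesis unfolding Y_def by (auto simp: algebra_simps)
  qed
  have Ym: "Y k \<in> sets lebesgue" for k
    unfolding Yalt using Qm D_leb shift_meas[OF D_leb] by auto
  have Zm: "Z k \<in> sets lebesgue" for k
    unfolding Z_def using Ym by (rule lebesgue_sets_translation)
  have ZY: "emeasure lebesgue (Z k) = emeasure lebesgue (Y k)" for k
    unfolding Z_def by (rule emeasure_transl)
  have U1: "torus_dom \<inter> {x. x - a \<in> Q} = (\<Union>k. Z k)"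
  proof (rule set_eqI, rule iffI)
    fix x assume x: "x \<in> torus_dom \<inter> {x. x - a \<in> Q}"
    define k where "k = fl (x - a)"
    define y where "y = x - a - Lv k"
    have yr: "y = red (x - a)" unfolding y_def k_def red_eq by simp
    have "y \<in> Q" using x per unfolding yr tper_def by auto
    moreover have "y \<in> torus_dom" unfolding yr by (rule red_in_D)
    moreover have "fl (y + a) = (\<lambda>i. - k i)"
    proof -
      have "y + a = x + Lv (\<lambda>i. - k i)" unfolding y_def Lv_neg by simp
      then show ?thesis using fl_D0[of x "\<lambda>i. - k i"] x by simp
    qed
    ultimately have "y \<in> Y k" unfolding Y_def by simp
    moreover have "x = a + Lv k + y" unfolding y_def by simp
    ultimately show "x \<in> (\<Union>k. Z k)" unfolding Z_def by blast
  next
    fix x assume "x \<in> (\<Union>k. Z k)"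
    then obtain k y where y: "y \<in> Y k" "x = a + Lv k + y" unfolding Z_def by auto
    have "x - a = y + Lv k" using y by simp
    then have "x - a \<in> Q" using tper_Lv[OF per, of y k] y unfolding Y_def by (simp add: add.commute)
    moreover have "fl x = (\<lambda>i. 0)"
    proof -
      have "fl x = fl ((y + a) + Lv k)" using y by (simp add: algebra_simps)
      also have "\<dots> = (\<lambda>i. 0)" using fl_shift[of "y + a" k] y unfolding Y_def by simp
      finally show ?thesis .
    qed
    ultimately show "x \<in> torus_dom \<inter> {x. x - a \<in> Q}" using fl_D by auto
  qed
  have U2: "torus_dom \<inter> Q = (\<Union>k. Y k)"
  proof (rule set_eqI, rule iffI)
    fix y assume "y \<in> torus_dom \<inter> Q"
    then have "y \<in> Y (\<lambda>i. - fl (y + a) i)" unfolding Y_def by auto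
    then show "y \<in> (\<Union>k. Y k)" by blast
  qed (auto simp: Y_def)
  have DY: "disjoint_family Y"
    unfolding disjoint_family_on_def Y_def by (auto simp: fun_eq_iff)
  have DZ: "disjoint_family Z"
  proof (unfold disjoint_family_on_def, intro ballI impI)
    fix k k' :: "'a \<Rightarrow> int" assume "k \<noteq> k'"
    show "Z k \<inter> Z k' = {}"
    proof (rule ccontr)
      assume "Z k \<inter> Z k' \<noteq> {}"
      then obtain y y' where yy: "y \<in> Y k" "y' \<in> Y k'" "a + Lv k + y = a + Lv k' + y'"
        unfolding Z_def by auto
      have "fl (y + Lv k) = fl (y' + Lv k')" using yy(3) by (simp add: algebra_simps)
      then have "k = k'" using fl_D0[of y k] fl_D0[of y' k'] yy unfolding Y_def by auto
      then show False using \<open>k \<noteq> k'\<close> by simp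
    qed
  qed
  have "emeasure lebesgue (torus_dom \<inter> {x. x - a \<in> Q}) = (\<integral>\<^sup>+k. emeasure lebesgue (Z k) \<partial>count_space UNIV)"
    unfolding U1 by (rule emeasure_UN_countable) (use Zm DZ in auto)
  also have "\<dots> = (\<integral>\<^sup>+k. emeasure lebesgue (Y k) \<partial>count_space UNIV)"
    by (simp add: ZY)
  also have "\<dots> = emeasure lebesgue (torus_dom \<inter> Q)"
    unfolding U2 by (rule emeasure_UN_countable[symmetric]) (use Ym DY in auto)
  finally show ?thesis .
qed



lemma D_sub_B: "torus_dom \<subseteq> cbox (\<chi> i. -1) (\<chi> i. 2*pi+1)"
proof
  fix x :: "real^'n" assume "x \<in> torus_dom"
  then have h: "0 \<le> x$i" "x$i < 2*pi" for i unfolding torus_dom_def by auto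
  have "-1 \<le> x$i \<and> x$i \<le> 2*pi+1" for i using h[of i] by linarith
  then show "x \<in> cbox (\<chi> i. -1) (\<chi> i. 2*pi+1)" unfolding mem_box_cart by simp
qed

lemma lmeas_D: "S \<subseteq> torus_dom \<Longrightarrow> S \<in> sets lebesgue \<Longrightarrow> S \<in> lmeasurable"
  by (meson D_sub_B bounded_cbox bounded_set_imp_lmeasurable bounded_subset subset_trans)

lemma inv_measure:
  assumes "tper Q" "Q \<in> sets lebesgue"
  shows "measure lebesgue (torus_dom \<inter> {x. x - a \<in> Q}) = measure lebesgue (torus_dom \<inter> Q)"
  unfolding measure_def using inv_emeasure[OF assms] by simp

definition GG :: "(real^'n) set \<Rightarrow> real^'n \<Rightarrow> (real^'n) set" where
  "GG Q a = torus_dom \<inter> (Q - {x. x - a \<in> Q})"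

lemma GG_meas: "Q \<in> sets lebesgue \<Longrightarrow> GG Q a \<in> lmeasurable"
  unfolding GG_def by (rule lmeas_D) (auto intro!: sets.Int sets.Diff D_leb shift_meas)

lemma GG_sub:
  assumes per: "tper Q" and Qm: "Q \<in> sets lebesgue"
  shows "measure lebesgue (GG Q (a + b)) \<le> measure lebesgue (GG Q a) + measure lebesgue (GG Q b)"
proof -
  define X where "X = torus_dom \<inter> {x. x - a \<in> Q - {y. y - b \<in> Q}}"
  have Xm: "X \<in> lmeasurable" unfolding X_def
    by (rule lmeas_D, blast, rule sets.Int[OF D_leb shift_meas[OF sets.Diff[OF Qm shift_meas[OF Qm]]]])
  have incl: "GG Q (a + b) \<subseteq> GG Q a \<union> X"
    unfolding GG_def X_def by (auto simp: algebra_simps)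
  have "measure lebesgue (GG Q (a + b)) \<le> measure lebesgue (GG Q a \<union> X)"
    by (rule measure_mono_fmeasurable[OF incl]) (use GG_meas[OF Qm] Xm in auto)
  also have "\<dots> \<le> measure lebesgue (GG Q a) + measure lebesgue X"
    by (rule measure_Un_le) (use GG_meas[OF Qm] Xm in auto)
  also have "measure lebesgue X = measure lebesgue (GG Q b)"
    unfolding X_def GG_def
    by (rule inv_measure) (auto intro!: tper_Diff tper_shift per sets.Diff shift_meas Qm)
  finally show ?thesis .
qed

lemma GG_sym:
  assumes per: "tper Q" and Qm: "Q \<in> sets lebesgue"
  shows "measure lebesgue (GG Q (- a)) = measure lebesgue (GG Q a)"
proof -
  define K where "K c = torus_dom \<inter> Q \<inter> {x. x - c \<in> Q}" for c
  have Km: "K c \<in> sets lebesgue" for c unfolding K_def by (auto intro!: sets.Int D_leb shift_meas Qm)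
  have DQ: "torus_dom \<inter> Q \<in> lmeasurable" by (rule lmeas_D) (auto intro!: sets.Int D_leb Qm)
  have G: "measure lebesgue (GG Q c) = measure lebesgue (torus_dom \<inter> Q) - measure lebesgue (K c)" for c
  proof -
    have "GG Q c = (torus_dom \<inter> Q) - K c" unfolding GG_def K_def by auto
    moreover have "measure lebesgue ((torus_dom \<inter> Q) - K c) = measure lebesgue (torus_dom \<inter> Q) - measure lebesgue (K c)"
      by (rule measure_Diff) (use DQ Km in \<open>auto simp: K_def fmeasurable_def\<close>)
    ultimately show ?thesis by simp
  qed
  have "K a = torus_dom \<inter> {x. x - a \<in> Q \<inter> {y. y - (- a) \<in> Q}}" unfolding K_def by auto
  then have "measure lebesgue (K a) = measure lebesgue (torus_dom \<inter> (Q \<inter> {y. y - (- a) \<in> Q}))"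
    by (simp only: inv_measure[OF tper_Int[OF per tper_shift[OF per]] sets.Int[OF Qm shift_meas[OF Qm]]])
  also have "\<dots> = measure lebesgue (K (- a))" unfolding K_def by (simp add: Int_assoc)
  finally show ?thesis using G by simp
qed

lemma GG_cont0:
  fixes Q :: "(real^'n) set"
  assumes Qm: "Q \<in> sets lebesgue" and "\<delta> > 0"
  shows "\<exists>r>0. \<forall>y. norm y < r \<longrightarrow> measure lebesgue (GG Q y) \<le> \<delta>"
proof -
  define B :: "(real^'n) set" where "B = cbox (\<chi> i. -1) (\<chi> i. 2*pi+1)"
  define E where "E = B \<inter> Q"
  have Em: "E \<in> sets lebesgue" unfolding E_def B_def using Qm by auto
  have d2: "\<delta>/2 > 0" using assms by simp
  obtain T where T: "closed T" "T \<subseteq> E" "E - T \<in> lmeasurable" "emeasure lebesgue (E - T) < ennreal (\<delta>/2)"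
    using sets_lebesgue_inner_closed[OF Em d2] by blast
  obtain U where U: "open U" "E \<subseteq> U" "U - E \<in> lmeasurable" "emeasure lebesgue (U - E) < ennreal (\<delta>/2)"
    using sets_lebesgue_outer_open[OF Em d2] by blast
  have "compact T"
    using T(1,2) unfolding E_def B_def
    by (meson bounded_cbox bounded_subset compact_eq_bounded_closed inf.boundedE)
  then obtain e where e: "e > 0" "(\<Union>x\<in>T. ball x e) \<subseteq> U"
    using compact_subset_open_imp_ball_epsilon_subset[OF _ U(1)] T(2) U(2) by blast
  show ?thesis
  proof (intro exI[of _ "min 1 e"] conjI allI impI)
    show "0 < min 1 e" using e by simp
    fix y :: "real^'n" assume y: "norm y < min 1 e"
    have incl: "GG Q y \<subseteq> (E - T) \<union> (+) y ` (U - E)"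
    proof
      fix x assume x: "x \<in> GG Q y"
      then have xD: "x \<in> torus_dom" and xQ: "x \<in> Q" and xy: "x - y \<notin> Q" unfolding GG_def by auto
      have xE: "x \<in> E" using xD xQ D_sub_B unfolding E_def B_def by auto
      show "x \<in> (E - T) \<union> (+) y ` (U - E)"
      proof (cases "x \<in> T")
        case False then show ?thesis using xE by auto
      next
        case True
        have "x - y \<in> ball x e" using y by (simp add: dist_norm)
        then have "x - y \<in> U" using e True by blast
        moreover have "x - y \<in> B"
        proof -
          have ya: "\<bar>y$i\<bar> < 1" for i using component_le_norm_cart[of y i] y by simp
          have h: "0 \<le> x$i" "x$i < 2*pi" for i using xD unfolding torus_dom_def by auto
          have "-1 \<le> x$i - y$i \<and> x$i - y$i \<le> 2*pi+1" for i
            using h[of i] ya[of i] by (simp add: abs_less_iff)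
          then show ?thesis unfolding B_def mem_box_cart by simp
        qed
        ultimately have "x - y \<in> U - E" using xy unfolding E_def by auto
        then show ?thesis by (auto intro: image_eqI[of _ _ "x - y"])
      qed
    qed
    have "emeasure lebesgue (GG Q y) \<le> emeasure lebesgue ((E - T) \<union> (+) y ` (U - E))"
      by (rule emeasure_mono[OF incl]) (use T U in \<open>auto intro!: lebesgue_sets_translation\<close>)
    also have "\<dots> \<le> emeasure lebesgue (E - T) + emeasure lebesgue ((+) y ` (U - E))"
      by (rule emeasure_subadditive) (use T U in \<open>auto intro!: lebesgue_sets_translation\<close>)
    also have "\<dots> = emeasure lebesgue (E - T) + emeasure lebesgue (U - E)"
      by (simp add: emeasure_transl)
    also have "\<dots> \<le> ennreal (\<delta>/2) + ennreal (\<delta>/2)"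
      using T(4) U(4) by (intro add_mono) auto
    also have "\<dots> = ennreal \<delta>" using assms by (simp flip: ennreal_plus)
    finally have "emeasure lebesgue (GG Q y) \<le> ennreal \<delta>" .
    then show "measure lebesgue (GG Q y) \<le> \<delta>"
      unfolding measure_def using assms by (intro enn2real_leI) auto
  qed
qed



lemma abstract_main:
  fixes L :: "real^'n \<Rightarrow> real" and R :: "'n set"
  assumes nonneg: "\<And>a. L a \<ge> 0"
    and sub: "\<And>a b. L (a + b) \<le> L a + L b"
    and sym: "\<And>a. L (-a) = L a"
    and cont: "\<And>\<delta>. \<delta> > 0 \<Longrightarrow> \<exists>r>0. \<forall>y. norm y < r \<longrightarrow> L y \<le> \<delta>"
    and rel: "\<forall>i\<in>R. \<not> (\<forall>\<kappa>. L (\<kappa> *\<^sub>R axis i 1) = 0)"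
  shows "\<exists>s :: 'n \<Rightarrow> real. (\<forall>i\<in>R. s i = 1 \<or> s i = -1) \<and>
    (\<exists>\<sigma>>0. \<exists>\<epsilon>>0.
      (let V = {(\<chi> i. if i \<in> R then s i * a i else 0) | a.
                  (\<forall>i\<in>R. a i \<ge> 0) \<and> (\<Sum>i\<in>R. (a i)^2) = 1}
       in (\<forall>v\<in>V. \<not> (\<forall>\<kappa>. L (\<kappa> *\<^sub>R v) = 0)) \<and>
          (\<forall>v. v \<noteq> 0 \<and> v /\<^sub>R norm v \<in> V \<and> norm v < \<epsilon> \<longrightarrow>
               L v \<ge> \<sigma> * norm v)))"
proof -
  have L0: "L 0 = 0"
  proof -
    have "L 0 \<le> \<delta>" if "\<delta> > 0" for \<delta> using cont[OF that] by auto
    then have "L 0 \<le> 0" by (meson dense not_le)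
    then show ?thesis using nonneg[of 0] by simp
  qed
  define W where "W = {a. \<forall>\<kappa>. L (\<kappa> *\<^sub>R a) = 0}"
  have subW: "subspace W"
    unfolding subspace_def W_def
  proof (intro conjI ballI allI CollectI)
    show "L (k *\<^sub>R 0) = 0" for k using L0 by simp
  next
    fix x y k assume x: "x \<in> {a. \<forall>\<kappa>. L (\<kappa> *\<^sub>R a) = 0}" and y: "y \<in> {a. \<forall>\<kappa>. L (\<kappa> *\<^sub>R a) = 0}"
    have "L (k *\<^sub>R (x + y)) \<le> L (k *\<^sub>R x) + L (k *\<^sub>R y)" using sub by (simp add: scaleR_right_distrib)
    then show "L (k *\<^sub>R (x + y)) = 0" using x y nonneg[of "k *\<^sub>R (x + y)"] by simp
  next
    fix c x k assume x: "x \<in> {a. \<forall>\<kappa>. L (\<kappa> *\<^sub>R a) = 0}"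
    then show "L (k *\<^sub>R c *\<^sub>R x) = 0" by simp
  qed
  have gex: "\<exists>g. (\<forall>w\<in>W. g \<bullet> w = 0) \<and> g$k \<noteq> 0" if k: "k \<in> R" for k
  proof -
    obtain y z where yz: "y \<in> span W" "\<And>w. w \<in> span W \<Longrightarrow> orthogonal z w" "axis k 1 = y + z"
      using orthogonal_subspace_decomp_exists by metis
    have spW: "span W = W" using subW span_eq_iff by blast
    have nW: "axis k 1 \<notin> W" using rel k unfolding W_def by auto
    have z0: "z \<noteq> 0" using yz nW spW by auto
    have "z$k = z \<bullet> axis k 1" by (simp add: cart_eq_inner_axis)
    also have "\<dots> = z \<bullet> y + z \<bullet> z" by (simp add: yz(3) inner_add_right)
    also have "z \<bullet> y = 0" using yz(2)[OF yz(1)] by (simp add: orthogonal_def)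
    finally have "z$k = z \<bullet> z" by simp
    then have "z$k \<noteq> 0" using z0 by simp
    moreover have "\<forall>w\<in>W. z \<bullet> w = 0" using yz(2) spW by (simp add: orthogonal_def)
    ultimately show ?thesis by blast
  qed
  have nex: "\<exists>n. (\<forall>w\<in>W. n \<bullet> w = 0) \<and> (\<forall>i\<in>S. n$i \<noteq> 0)" if "S \<subseteq> R" for S
    using finite[of S] that
  proof (induction S rule: finite_induct)
    case empty then show ?case by (intro exI[of _ 0]) simp
  next
    case (insert k S)
    then obtain n where n: "\<forall>w\<in>W. n \<bullet> w = 0" "\<forall>i\<in>S. n$i \<noteq> 0" by auto
    obtain g where g: "\<forall>w\<in>W. g \<bullet> w = 0" "g$k \<noteq> 0" using gex[of k] insert.prems by auto
    define B where "B = (\<lambda>i. - (n$i) / (g$i)) ` {i \<in> insert k S. g$i \<noteq> 0}"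
    have "finite B" unfolding B_def by simp
    then obtain c :: real where c: "c \<notin> B" using ex_new_if_finite infinite_UNIV_char_0 by blast
    show ?case
    proof (intro exI[of _ "n + c *\<^sub>R g"] conjI ballI)
      fix w assume "w \<in> W" then show "(n + c *\<^sub>R g) \<bullet> w = 0" using n g by (simp add: inner_add_left)
    next
      fix i assume i: "i \<in> insert k S"
      show "(n + c *\<^sub>R g)$i \<noteq> 0"
      proof (cases "g$i = 0")
        case True
        then have "i \<in> S" using i g by auto
        then show ?thesis using True n by simp
      next
        case False
        show ?thesis
        proof
          assume "(n + c *\<^sub>R g)$i = 0"
          then have "c = - (n$i) / (g$i)" using False by (simp add: field_simps)
          then have "c \<in> B" unfolding B_def using i False by auto
          then show False using c by simp
        qed
      qed
    qed
  qed
  obtain n where n: "\<forall>w\<in>W. n \<bullet> w = 0" "\<forall>i\<in>R. n$i \<noteq> 0" using nex[of R] by auto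
  define s where "s i = (if n$i > 0 then 1 else (-1::real))" for i
  have s1: "s i = 1 \<or> s i = -1" for i unfolding s_def by auto
  have ss: "s i * s i = 1" for i unfolding s_def by auto
  have sn: "i \<in> R \<Longrightarrow> s i * n$i > 0" for i using n(2) unfolding s_def by auto
  define Vc where "Vc = {u::real^'n. (\<forall>i. i \<notin> R \<longrightarrow> u$i = 0) \<and> (\<forall>i. i \<in> R \<longrightarrow> 0 \<le> s i * u$i)} \<inter> sphere 0 1"
  have cVc: "compact Vc" unfolding Vc_def
    by (intro closed_Int_compact compact_sphere closed_Collect_all closed_Collect_imp closed_Collect_conj
        closed_Collect_eq closed_Collect_le continuous_intros) auto
  have VcW: "u \<notin> W" if u: "u \<in> Vc" for u
  proof
    assume "u \<in> W"
    then have z: "n \<bullet> u = 0" using n by auto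
    have u1: "norm u = 1" using u unfolding Vc_def by auto
    obtain j where j: "j \<in> R" "u$j \<noteq> 0"
    proof -
      have "\<exists>j. u$j \<noteq> 0" using u1 by (metis norm_zero vec_eq_iff zero_index zero_neq_one)
      then obtain j where "u$j \<noteq> 0" by blast
      moreover then have "j \<in> R" using u unfolding Vc_def by auto
      ultimately show ?thesis using that by blast
    qed
    have trm: "n$i * u$i = (s i * n$i) * (s i * u$i)" for i
      using ss[of i] by (simp add: algebra_simps)
    have nonn: "0 \<le> n$i * u$i" for i
    proof (cases "i \<in> R")
      case True then show ?thesis unfolding trm using sn[of i] u unfolding Vc_def by auto
    next
      case False then show ?thesis using u unfolding Vc_def by auto
    qed
    have pj: "0 < n$j * u$j"
    proof -
      have "0 < s j * u$j" using u j unfolding Vc_def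
        by (metis (mono_tags, lifting) IntD1 mem_Collect_eq mult_eq_0_iff order_le_less ss zero_neq_one)
      then show ?thesis unfolding trm using sn[OF j(1)] by simp
    qed
    have "0 < (\<Sum>i\<in>UNIV. n$i * u$i)" by (rule sum_pos2[where i=j]) (use nonn pj in auto)
    then show False using z by (simp add: inner_vec_def)
  qed
  have VVc: "v \<in> Vc" if vin: "v \<in> {(\<chi> i. if i \<in> R then s i * a i else 0) | a.
                  (\<forall>i\<in>R. a i \<ge> 0) \<and> (\<Sum>i\<in>R. (a i)^2) = 1}" for v
  proof -
    obtain a where a: "v = (\<chi> i. if i \<in> R then s i * a i else 0)" "\<forall>i\<in>R. a i \<ge> 0" "(\<Sum>i\<in>R. (a i)^2) = 1"
      using vin by blast
    have "v \<bullet> v = (\<Sum>i\<in>UNIV. if i \<in> R then (a i)^2 else 0)"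
      unfolding inner_vec_def a(1) by (intro sum.cong refl) (auto simp: power2_eq_square ss algebra_simps)
    also have "\<dots> = 1" using a(3) by (simp add: sum.If_cases)
    finally have "norm v = 1" by (simp add: norm_eq_1)
    moreover have "0 \<le> s i * v$i" if "i \<in> R" for i
      using a that ss[of i] by (simp add: mult.assoc[symmetric])
    ultimately show ?thesis unfolding Vc_def using a(1) by auto
  qed
  have Lmult: "L (real m *\<^sub>R x) \<le> real m * L x" for m x
  proof (induction m)
    case 0 then show ?case using L0 by simp
  next
    case (Suc m)
    have "L (real (Suc m) *\<^sub>R x) = L (x + real m *\<^sub>R x)" by (simp add: algebra_simps)
    also have "\<dots> \<le> L x + L (real m *\<^sub>R x)" by (rule sub)
    finally show ?case using Suc by (simp add: algebra_simps)
  qed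
  have main: "\<exists>\<sigma>>0. \<exists>\<epsilon>>0. \<forall>v. v \<noteq> 0 \<and> v /\<^sub>R norm v \<in> Vc \<and> norm v < \<epsilon> \<longrightarrow> \<sigma> * norm v \<le> L v"
  proof (rule ccontr)
    assume H: "\<not> ?thesis"
    have "\<forall>k::nat. \<exists>v. v \<noteq> 0 \<and> v /\<^sub>R norm v \<in> Vc \<and> norm v < inverse (real (Suc k)) \<and>
                      L v < inverse (real (Suc k)) * norm v"
    proof
      fix k :: nat
      have "inverse (real (Suc k)) > 0" by simp
      then show "\<exists>v. v \<noteq> 0 \<and> v /\<^sub>R norm v \<in> Vc \<and> norm v < inverse (real (Suc k)) \<and>
                      L v < inverse (real (Suc k)) * norm v"
        using H by (meson not_le)
    qed
    then obtain v where v: "\<And>k. v k \<noteq> 0" "\<And>k. v k /\<^sub>R norm (v k) \<in> Vc"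
      "\<And>k. norm (v k) < inverse (real (Suc k))" "\<And>k. L (v k) < inverse (real (Suc k)) * norm (v k)"
      by metis
    define t where "t k = norm (v k)" for k
    define u where "u k = v k /\<^sub>R t k" for k
    have tpos: "t k > 0" for k using v(1) unfolding t_def by simp
    have tu: "t k *\<^sub>R u k = v k" for k using tpos[of k] unfolding u_def by simp
    have uV: "u k \<in> Vc" for k using v(2) unfolding u_def t_def .
    obtain l r where l: "l \<in> Vc" "strict_mono r" "(u \<circ> r) \<longlonglongrightarrow> l"
      using compact_imp_seq_compact[OF cVc] uV unfolding seq_compact_def by metis
    have zero: "L (\<tau> *\<^sub>R l) = 0" if tau: "\<tau> > 0" for \<tau>
    proof -
      define m where "m j = nat \<lfloor>\<tau> / t (r j)\<rfloor>" for j
      define x where "x j = (real (m j) * t (r j)) *\<^sub>R u (r j)" for j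
      have mt: "real (m j) * t (r j) \<le> \<tau> \<and> \<tau> - t (r j) < real (m j) * t (r j)" for j
      proof -
        have tp: "t (r j) > 0" by (rule tpos)
        have "0 \<le> \<tau> / t (r j)" using tau tp by simp
        then have rm: "real (m j) = of_int \<lfloor>\<tau> / t (r j)\<rfloor>" unfolding m_def by simp
        have a: "of_int \<lfloor>\<tau> / t (r j)\<rfloor> * t (r j) \<le> \<tau>"
          using of_int_floor_le[of "\<tau> / t (r j)"] tp by (simp add: le_divide_eq)
        have b0: "\<tau> / t (r j) < of_int \<lfloor>\<tau> / t (r j)\<rfloor> + 1" by (rule real_of_int_floor_add_one_gt)
        have b: "\<tau> < (of_int \<lfloor>\<tau> / t (r j)\<rfloor> + 1) * t (r j)"
          using b0 unfolding pos_divide_less_eq[OF tp] .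
        show ?thesis unfolding rm using a b by (simp add: algebra_simps)
      qed
      have tr: "t (r j) < inverse (real (Suc j))" for j
      proof -
        have "t (r j) < inverse (real (Suc (r j)))" using v(3) unfolding t_def by blast
        also have "\<dots> \<le> inverse (real (Suc j))" using seq_suble[OF l(2), of j] by (simp add: le_imp_inverse_le)
        finally show ?thesis .
      qed
      have Lx: "L (x j) \<le> \<tau> * inverse (real (Suc j))" for j
      proof -
        have "L (x j) = L (real (m j) *\<^sub>R v (r j))" unfolding x_def tu[symmetric] by simp
        also have "\<dots> \<le> real (m j) * L (v (r j))" by (rule Lmult)
        also have "\<dots> \<le> real (m j) * (inverse (real (Suc (r j))) * t (r j))"
          using v(4)[of "r j"] unfolding t_def by (intro mult_left_mono) auto
        also have "\<dots> = inverse (real (Suc (r j))) * (real (m j) * t (r j))" by simp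
        also have "\<dots> \<le> inverse (real (Suc j)) * \<tau>"
        proof (rule mult_mono)
          show "inverse (real (Suc (r j))) \<le> inverse (real (Suc j))"
            using seq_suble[OF l(2), of j] by (simp add: le_imp_inverse_le)
        qed (use mt[of j] tpos in auto)
        finally show ?thesis by (simp add: mult.commute)
      qed
      have A: "(\<lambda>j. real (m j) * t (r j)) \<longlonglongrightarrow> \<tau>"
      proof (rule tendsto_sandwich[of "\<lambda>j. \<tau> - inverse (real (Suc j))" _ _ "\<lambda>j. \<tau>"])
        show "\<forall>\<^sub>F j in sequentially. \<tau> - inverse (real (Suc j)) \<le> real (m j) * t (r j)"
          using mt tr by (auto intro!: always_eventually) (smt (verit))
        show "\<forall>\<^sub>F j in sequentially. real (m j) * t (r j) \<le> \<tau>" using mt by auto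
        show "(\<lambda>j. \<tau> - inverse (real (Suc j))) \<longlonglongrightarrow> \<tau>"
          using tendsto_diff[OF tendsto_const LIMSEQ_inverse_real_of_nat, of \<tau>] by simp
      qed simp
      have B: "(\<lambda>j. u (r j)) \<longlonglongrightarrow> l" using l(3) by (simp add: o_def)
      have X: "x \<longlonglongrightarrow> \<tau> *\<^sub>R l" unfolding x_def by (rule tendsto_scaleR[OF A B])
      have h2: "L (\<tau> *\<^sub>R l) \<le> 2 * \<delta>" if d: "\<delta> > 0" for \<delta>
      proof -
        obtain r0 where r0: "r0 > 0" "\<forall>y. norm y < r0 \<longrightarrow> L y \<le> \<delta>" using cont[OF d] by blast
        obtain N1 where N1: "\<forall>j\<ge>N1. norm (x j - \<tau> *\<^sub>R l) < r0" using X r0(1) unfolding LIMSEQ_iff by blast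
        obtain N2 :: nat where N2: "\<tau> / \<delta> < real N2" using reals_Archimedean2 by blast
        define j where "j = max N1 N2"
        have "norm (x j - \<tau> *\<^sub>R l) < r0" using N1 unfolding j_def by simp
        then have "norm (\<tau> *\<^sub>R l - x j) < r0" by (simp add: norm_minus_commute)
        then have L1: "L (\<tau> *\<^sub>R l - x j) \<le> \<delta>" using r0 by blast
        have "\<tau> * inverse (real (Suc j)) \<le> \<delta>"
        proof -
          have "\<tau> < \<delta> * real N2" using N2 d by (simp add: divide_less_eq mult.commute)
          also have "\<dots> \<le> \<delta> * real (Suc j)" using d unfolding j_def by simp
          finally show ?thesis by (simp add: field_simps)
        qed
        then have L2: "L (x j) \<le> \<delta>" using Lx[of j] by simp
        have "L (\<tau> *\<^sub>R l) \<le> L (x j) + L (\<tau> *\<^sub>R l - x j)" using sub[of "x j" "\<tau> *\<^sub>R l - x j"] by simp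
        then show ?thesis using L1 L2 by simp
      qed
      have "L (\<tau> *\<^sub>R l) \<le> 0"
      proof (rule ccontr)
        assume "\<not> L (\<tau> *\<^sub>R l) \<le> 0"
        then have "L (\<tau> *\<^sub>R l) / 4 > 0" by simp
        from h2[OF this] \<open>\<not> L (\<tau> *\<^sub>R l) \<le> 0\<close> show False by simp
      qed
      then show ?thesis using nonneg[of "\<tau> *\<^sub>R l"] by simp
    qed
    have "l \<in> W" unfolding W_def
    proof (intro CollectI allI)
      fix \<kappa> :: real
      show "L (\<kappa> *\<^sub>R l) = 0"
      proof (cases "\<kappa> > 0")
        case True then show ?thesis by (rule zero)
      next
        case False
        show ?thesis
        proof (cases "\<kappa> = 0")
          case True then show ?thesis using L0 by simp
        next
          case False
          then have "- \<kappa> > 0" using \<open>\<not> \<kappa> > 0\<close> by simp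
          then have "L ((- \<kappa>) *\<^sub>R l) = 0" by (rule zero)
          then show ?thesis using sym[of "\<kappa> *\<^sub>R l"] by simp
        qed
      qed
    qed
    then show False using VcW l(1) by blast
  qed
  then obtain \<sigma> \<epsilon> where se: "\<sigma> > 0" "\<epsilon> > 0"
    "\<forall>v. v \<noteq> 0 \<and> v /\<^sub>R norm v \<in> Vc \<and> norm v < \<epsilon> \<longrightarrow> \<sigma> * norm v \<le> L v" by blast
  have sR: "\<forall>i\<in>R. s i = 1 \<or> s i = -1" using s1 by blast
  have LV: "let V = {(\<chi> i. if i \<in> R then s i * a i else 0) | a.
                  (\<forall>i\<in>R. a i \<ge> 0) \<and> (\<Sum>i\<in>R. (a i)^2) = 1}
       in (\<forall>v\<in>V. \<not> (\<forall>\<kappa>. L (\<kappa> *\<^sub>R v) = 0)) \<and>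
          (\<forall>v. v \<noteq> 0 \<and> v /\<^sub>R norm v \<in> V \<and> norm v < \<epsilon> \<longrightarrow>
               L v \<ge> \<sigma> * norm v)"
      unfolding Let_def
    proof (intro conjI ballI allI impI)
      fix v assume "v \<in> {(\<chi> i. if i \<in> R then s i * a i else 0) | a.
                  (\<forall>i\<in>R. a i \<ge> 0) \<and> (\<Sum>i\<in>R. (a i)^2) = 1}"
      then have "v \<notin> W" using VVc VcW by blast
      then show "\<not> (\<forall>\<kappa>. L (\<kappa> *\<^sub>R v) = 0)" unfolding W_def by blast
    next
      fix v assume "v \<noteq> 0 \<and> v /\<^sub>R norm v \<in> {(\<chi> i. if i \<in> R then s i * a i else 0) | a.
                  (\<forall>i\<in>R. a i \<ge> 0) \<and> (\<Sum>i\<in>R. (a i)^2) = 1} \<and> norm v < \<epsilon>"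
      then show "L v \<ge> \<sigma> * norm v" using VVc se(3) by blast
    qed
  show ?thesis using sR LV se(1,2) by blast
qed

theorem mainTheorem6:
  fixes M :: "(real^'n) set" and R :: "'n set"
  assumes "M \<subseteq> torus_dom" and "M \<in> sets lebesgue"
    and "0 < measure lebesgue M" and "measure lebesgue M < (2*pi) ^ CARD('n)"
    and "R \<noteq> {}"
    and "\<forall>i\<in>R. relevant_dir M (axis i 1)"
    and "\<forall>i. i \<notin> R \<longrightarrow> irrelevant_dir M (axis i 1)"
  shows "\<exists>s :: 'n \<Rightarrow> real. (\<forall>i\<in>R. s i = 1 \<or> s i = -1) \<and>
    (\<exists>\<sigma>>0. \<exists>\<epsilon>>0.
      (let V = {(\<chi> i. if i \<in> R then s i * a i else 0) | a.
                  (\<forall>i\<in>R. a i \<ge> 0) \<and> (\<Sum>i\<in>R. (a i)^2) = 1}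
       in (\<forall>v\<in>V. relevant_dir M v) \<and>
          (\<forall>v. v \<noteq> 0 \<and> v /\<^sub>R norm v \<in> V \<and> norm v < \<epsilon> \<longrightarrow>
               Lambda M v \<ge> \<sigma> * norm v)))"
  proof -
  define P where "P = {y. red y \<in> M}"
  have Pm: "P \<in> sets lebesgue" unfolding P_def using P_meas assms(1,2) by blast
  have per: "tper P" unfolding P_def by (rule tper_P)
  have LE: "Lambda M a = measure lebesgue (GG P a)" for a
    unfolding GG_def P_def using Lambda_eq[OF assms(1)] by simp
  show ?thesis
    unfolding relevant_dir_def irrelevant_dir_def
  proof (rule abstract_main)
    show "Lambda M a \<ge> 0" for a unfolding LE by simp
    show "Lambda M (a + b) \<le> Lambda M a + Lambda M b" for a b unfolding LE by (rule GG_sub[OF per Pm])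
    show "Lambda M (- a) = Lambda M a" for a unfolding LE by (rule GG_sym[OF per Pm])
    show "\<exists>r>0. \<forall>y. norm y < r \<longrightarrow> Lambda M y \<le> \<delta>" if "\<delta> > 0" for \<delta>
      unfolding LE by (rule GG_cont0[OF Pm that])
    show "\<forall>i\<in>R. \<not> (\<forall>\<kappa>. Lambda M (\<kappa> *\<^sub>R axis i 1) = 0)"
      using assms(6) unfolding relevant_dir_def irrelevant_dir_def by blast
  qed
qed

end
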